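(* Let $n,k,t$ be positive integers with $k<n$ and $t\ge 4$, let $q$ be a prime power and $\mathcal{D}$ the Desarguesian $(t-1)$-spread of $\mathrm{PG}(nt-1,q)$. Let $\nu$ be a $\mathcal{D}_{n-k-1}$-subspace of $\mathrm{PG}(nt-1,q)$ and let $\Pi$ be an $(nt-kt+1)$-dimensional subspace containing $\nu$ such that the subspace of $\mathrm{PG}(n-1,q^t)$ spanned by the points of $\mathcal{B}(\Pi)$ has dimension $n-k+1$. Let $\Omega$ be an $(nt-kt-2)$-dimensional subspace of $\Pi$ meeting $\nu$ in an $(nt-kt-4)$-dimensional subspace, let $\Gamma$ be a plane of $\Pi$ skew from $\Omega$, and let $\bar{B}$ be a minimal blocking set (with respect to lines) of $\Gamma$ which is disjoint from $\nu$. Let $K$ be the cone with vertex $\Omega$ and base $\bar{B}$. Then $\mathcal{B}(K)$ is a minimal blocking set with respect to $(k-1)$-dimensional subspaces of $\mathrm{PG}(n-1,q^t)$.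
   Context: Field reduction: each point of $\mathrm{PG}(n-1,q^t)$ corresponds to a $(t-1)$-dimensional subspace of $\mathrm{PG}(nt-1,q)$ (the $1$-dimensional $\mathbb{F}_{q^t}$-subspace viewed over $\mathbb{F}_q$); these form the Desarguesian $(t-1)$-spread $\mathcal{D}$. A $\mathcal{D}_{r-1}$-subspace is an $(rt-1)$-dimensional subspace of $\mathrm{PG}(nt-1,q)$ spanned by elements of $\mathcal{D}$ (the field reduction of an $(r-1)$-dimensional subspace of $\mathrm{PG}(n-1,q^t)$). For $U\subseteq\mathrm{PG}(nt-1,q)$, $\mathcal{B}(U)$ is the set of elements of $\mathcal{D}$ meeting $U$, identified with points of $\mathrm{PG}(n-1,q^t)$. The cone with vertex $\Omega$ and base $\bar{B}$ is $\bigcup_{P\in\bar B}\langle P,\Omega\rangle$. A blocking set with respect to $j$-spaces is a point set meeting every $j$-dimensional subspace; minimal means no proper subset has this property. *)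

theory Defs
  imports "HOL-Analysis.Analysis"
begin

text \<open>Setting.  'a is the finite field F_q, 'b is the finite field F_(q^t), and
 emb :: 'a => 'b is a field embedding (so F_q is a subfield of F_(q^t)).
 The ambient space of PG(n-1,q^t) is V = 'b^'n with n = CARD('n).
 Field reduction: the same set V viewed as an F_q-vector space (scalar
 multiplication c . v = emb c *s v) has F_q-dimension n t, so PG(nt-1,q) is
 the projective space of V over F_q.  A projective subspace of dimension d is
 a linear subspace of vector dimension d+1; a point is a 1-dimensional subspace.
 A point set of PG(nt-1,q) such as the cone K is represented by the union of its
 points (a set of vectors).\<close>

definition subfield_emb :: "('a::field \<Rightarrow> 'b::field) \<Rightarrow> bool" where
  "subfield_emb emb \<longleftrightarrow> inj emb \<and> emb 0 = 0 \<and> emb 1 = 1 \<and>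
     (\<forall>x y. emb (x + y) = emb x + emb y) \<and> (\<forall>x y. emb (x * y) = emb x * emb y)"

definition scq :: "('a::field \<Rightarrow> 'b::field) \<Rightarrow> 'a \<Rightarrow> 'b^'n \<Rightarrow> 'b^'n" where
  "scq emb c v = emb c *s v"

definition sub_q :: "('a::field \<Rightarrow> 'b::field) \<Rightarrow> ('b^'n) set \<Rightarrow> bool" where
  "sub_q emb S = module.subspace (scq emb) S"

definition span_q :: "('a::field \<Rightarrow> 'b::field) \<Rightarrow> ('b^'n) set \<Rightarrow> ('b^'n) set" where
  "span_q emb S = module.span (scq emb) S"

definition dim_q :: "('a::field \<Rightarrow> 'b::field) \<Rightarrow> ('b^'n) set \<Rightarrow> nat" where
  "dim_q emb S = vector_space.dim (scq emb) S"

definition sub_Q :: "('b::field^'n) set \<Rightarrow> bool" where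
  "sub_Q S = module.subspace ((*s) :: 'b \<Rightarrow> 'b^'n \<Rightarrow> 'b^'n) S"

definition span_Q :: "('b::field^'n) set \<Rightarrow> ('b^'n) set" where
  "span_Q S = module.span ((*s) :: 'b \<Rightarrow> 'b^'n \<Rightarrow> 'b^'n) S"

definition dim_Q :: "('b::field^'n) set \<Rightarrow> nat" where
  "dim_Q S = vector_space.dim ((*s) :: 'b \<Rightarrow> 'b^'n \<Rightarrow> 'b^'n) S"

definition pg_q_subspace :: "('a::field \<Rightarrow> 'b::field) \<Rightarrow> nat \<Rightarrow> ('b^'n) set \<Rightarrow> bool" where
  "pg_q_subspace emb d W \<longleftrightarrow> sub_q emb W \<and> dim_q emb W = d + 1"

definition points_q :: "('a::field \<Rightarrow> 'b::field) \<Rightarrow> ('b^'n) set \<Rightarrow> ('b^'n) set set" where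
  "points_q emb W = {P. pg_q_subspace emb 0 P \<and> P \<subseteq> W}"

text \<open>The Desarguesian spread: the F_(q^t)-span of each nonzero vector, viewed over F_q.
 Each element is identified with the corresponding point of PG(n-1,q^t).\<close>
definition desarg_spread :: "('b::field^'n) set set" where
  "desarg_spread = {span_Q {v} | v. v \<noteq> 0}"

text \<open>A D_(r-1)-subspace: the field reduction of an (r-1)-dimensional subspace of
 PG(n-1,q^t), i.e. an F_(q^t)-subspace of dimension r, viewed over F_q.\<close>
definition D_subspace :: "nat \<Rightarrow> ('b::field^'n) set \<Rightarrow> bool" where
  "D_subspace r W \<longleftrightarrow> sub_Q W \<and> dim_Q W = r"

definition Bset :: "('b::field^'n) set \<Rightarrow> ('b^'n) set set" where
  "Bset U = {S \<in> desarg_spread. S \<inter> U - {0} \<noteq> {}}"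

definition cone :: "('a::field \<Rightarrow> 'b::field) \<Rightarrow> ('b^'n) set \<Rightarrow> ('b^'n) set set \<Rightarrow> ('b^'n) set" where
  "cone emb \<Omega> Bbar = (\<Union>P\<in>Bbar. span_q emb (P \<union> \<Omega>))"

definition blocking_Q :: "nat \<Rightarrow> ('b::field^'n) set set \<Rightarrow> bool" where
  "blocking_Q j B \<longleftrightarrow> B \<subseteq> desarg_spread \<and>
     (\<forall>W. sub_Q W \<and> dim_Q W = j + 1 \<longrightarrow> (\<exists>P\<in>B. P \<subseteq> W))"

definition minimal_blocking_Q :: "nat \<Rightarrow> ('b::field^'n) set set \<Rightarrow> bool" where
  "minimal_blocking_Q j B \<longleftrightarrow> blocking_Q j B \<and> (\<forall>B'. B' \<subset> B \<longrightarrow> \<not> blocking_Q j B')"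

definition blocking_lines_in :: "('a::field \<Rightarrow> 'b::field) \<Rightarrow> ('b^'n) set \<Rightarrow> ('b^'n) set set \<Rightarrow> bool" where
  "blocking_lines_in emb \<Gamma> B \<longleftrightarrow> B \<subseteq> points_q emb \<Gamma> \<and>
     (\<forall>L. pg_q_subspace emb 1 L \<and> L \<subseteq> \<Gamma> \<longrightarrow> (\<exists>P\<in>B. P \<subseteq> L))"

definition minimal_blocking_lines_in :: "('a::field \<Rightarrow> 'b::field) \<Rightarrow> ('b^'n) set \<Rightarrow> ('b^'n) set set \<Rightarrow> bool" where
  "minimal_blocking_lines_in emb \<Gamma> B \<longleftrightarrow> blocking_lines_in emb \<Gamma> B \<and>
     (\<forall>B'. B' \<subset> B \<longrightarrow> \<not> blocking_lines_in emb \<Gamma> B')"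

end

theory Submission
  imports Defs "HOL-Library.FuncSet"
begin


context vector_space begin
lemma card_span_indep:
  assumes fa: "finite (UNIV::'a set)" and ind: "independent B" and fB: "finite B"
  shows "card (span B) = CARD('a) ^ card B"
proof -
  let ?g = "\<lambda>u. \<Sum>v\<in>B. u v *s v"
  have sp: "span B = ?g ` (B \<rightarrow>\<^sub>E UNIV)"
  proof
    show "span B \<subseteq> ?g ` (B \<rightarrow>\<^sub>E UNIV)"
    proof
      fix x assume "x \<in> span B"
      then obtain u where x: "x = ?g u" using span_finite[OF fB] by auto
      have "x = ?g (restrict u B)" unfolding x by (rule sum.cong) auto
      moreover have "restrict u B \<in> B \<rightarrow>\<^sub>E UNIV" by auto
      ultimately show "x \<in> ?g ` (B \<rightarrow>\<^sub>E UNIV)" by blast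
    qed
    show "?g ` (B \<rightarrow>\<^sub>E UNIV) \<subseteq> span B"
      unfolding span_finite[OF fB] by auto
  qed
  have inj: "inj_on ?g (B \<rightarrow>\<^sub>E UNIV)"
  proof (rule inj_onI)
    fix u w assume u: "u \<in> B \<rightarrow>\<^sub>E UNIV" and w: "w \<in> B \<rightarrow>\<^sub>E UNIV" and e: "?g u = ?g w"
    have "(\<Sum>v\<in>B. (u v - w v) *s v) = 0"
      using e by (simp add: scale_left_diff_distrib sum_subtractf)
    then have "\<forall>v\<in>B. u v - w v = 0" using independentD[OF ind fB subset_refl, of "\<lambda>v. u v - w v"] by blast
    then show "u = w" using u w by (auto simp: PiE_def extensional_def fun_eq_iff) 
  qed
  have "card (span B) = card (B \<rightarrow>\<^sub>E (UNIV::'a set))" unfolding sp by (rule card_image[OF inj])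
  also have "\<dots> = CARD('a) ^ card B" by (simp add: card_funcsetE fB)
  finally show ?thesis .
qed

lemma card_subspace_dim:
  assumes fa: "finite (UNIV::'a set)" and S: "subspace S" and fS: "finite S"
  shows "card S = CARD('a) ^ dim S"
proof -
  obtain B where B: "B \<subseteq> S" "independent B" "S \<subseteq> span B" "card B = dim S"
    using basis_exists by blast
  have "span B = S" using B S span_minimal by blast
  moreover have "finite B" using B fS finite_subset by blast
  ultimately show ?thesis using card_span_indep[OF fa B(2)] B(4) by simp
qed
end

definition ssum :: "'v::ab_group_add set \<Rightarrow> 'v set \<Rightarrow> 'v set" where
  "ssum A B = {x + y | x y. x \<in> A \<and> y \<in> B}"

context module begin
lemma span_pair: "span {a, b} = {c *s a + d *s b | c d. True}"
proof -
  have "span {a, b} = span ({a} \<union> {b})" by (metis insert_is_Un)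
  also have "\<dots> = {x + y | x y. x \<in> span {a} \<and> y \<in> span {b}}" by (rule span_Un)
  finally show ?thesis by (auto simp: span_singleton)
qed

lemma ssum_span: assumes "subspace A" "subspace B" shows "span (A \<union> B) = ssum A B"
proof -
  have e: "span A = A" "span B = B" using assms by simp_all
  show ?thesis unfolding span_Un ssum_def e ..
qed

lemma ssum_sub: "subspace A \<Longrightarrow> subspace B \<Longrightarrow> subspace (ssum A B)"
  using subspace_span ssum_span by metis

lemma ssum_le: "subspace C \<Longrightarrow> A \<subseteq> C \<Longrightarrow> B \<subseteq> C \<Longrightarrow> ssum A B \<subseteq> C"
  unfolding ssum_def using subspace_add by blast

lemma ssum_ge1: "subspace B \<Longrightarrow> A \<subseteq> ssum A B"
  unfolding ssum_def using subspace_0 by force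
lemma ssum_ge2: "subspace A \<Longrightarrow> B \<subseteq> ssum A B"
  unfolding ssum_def using subspace_0 by force
end

context finite_dimensional_vector_space begin
lemma grass: "subspace S \<Longrightarrow> subspace T \<Longrightarrow> dim (ssum S T) + dim (S \<inter> T) = dim S + dim T"
  unfolding ssum_def by (rule dim_sums_Int)

lemma pt_eq: assumes "subspace P" "dim P = 1" "p \<in> P" "p \<noteq> 0" shows "P = span {p}"
proof -
  have "span {p} \<subseteq> P" using assms span_minimal by blast
  moreover have "dim (span {p}) = 1" using assms by simp
  ultimately show ?thesis using subspace_dim_equal assms by (metis le_refl subspace_span)
qed

lemma span_single_eq: assumes "w \<in> span {v}" "w \<noteq> 0" shows "span {w} = span {v}"
proof -
  have "v \<noteq> 0" using assms by auto
  then have "dim (span {v}) = 1" by simp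
  then show ?thesis using pt_eq[of "span {v}" w] assms by simp
qed

lemma sub_of_dim: assumes "subspace Y" "d \<le> dim Y"
  obtains L where "subspace L" "L \<subseteq> Y" "dim L = d"
proof -
  obtain B where B: "B \<subseteq> Y" "independent B" "Y \<subseteq> span B" "card B = dim Y"
    using basis_exists by blast
  have fB: "finite B" using B finiteI_independent by blast
  obtain C where C: "C \<subseteq> B" "card C = d" using obtain_subset_with_card_n[of d B] B assms by auto
  have "independent C" using C B independent_mono by blast
  then have "dim (span C) = d" using C dim_span_eq_card_independent by simp
  moreover have "span C \<subseteq> Y" using C B assms span_minimal by (meson order_trans)
  ultimately show ?thesis using that subspace_span by blast
qed

lemma nonzero_of_dim: assumes "0 < dim S" obtains x where "x \<in> S" "x \<noteq> 0"
  using assms dim_eq_0 by (metis gr_implies_not0 insertI1 subsetI subset_singletonD)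
end

lemma grp1: "(A::'v::ab_group_add) + (B + C) = p + z \<Longrightarrow> p - B = A + C - z"
  by (simp add: algebra_simps)
lemma grp2: "(A1::'v::ab_group_add) + A2 + (B1 + B2) = p + z \<Longrightarrow> p - (A1 + B1) = A2 + B2 - z"
  by (simp add: algebra_simps)

locale thm_ctx = q: finite_dimensional_vector_space sc qB
  for sc :: "'a::{finite,field} \<Rightarrow> ('b::{finite,field},'n::finite) vec \<Rightarrow> ('b,'n) vec" and qB +
  fixes emb :: "'a \<Rightarrow> 'b"
    and n k t :: nat
    and nu Pi_s Omega Gamma :: "('b^'n) set"
    and Bbar :: "('b^'n) set set"
  assumes sc_def: "sc = scq emb"
    and emb: "subfield_emb emb"
    and t_def: "CARD('b) = CARD('a) ^ t"
    and n_def: "n = CARD('n)"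
    and k_pos: "0 < k" and kn: "k < n" and t4: "4 \<le> t"
    and nu_D: "D_subspace (n - k) (nu :: ('b^'n) set)"
    and Pi_sub: "pg_q_subspace emb ((n - k) * t + 1) Pi_s" and nu_Pi: "nu \<subseteq> Pi_s"
    and Pi_span: "dim_Q (span_Q (\<Union>(Bset Pi_s))) = n - k + 2"
    and Omega_sub: "pg_q_subspace emb ((n - k) * t - 2) Omega" and Omega_Pi: "Omega \<subseteq> Pi_s"
    and Omega_nu: "pg_q_subspace emb ((n - k) * t - 4) (Omega \<inter> nu)"
    and Gamma_sub: "pg_q_subspace emb 2 Gamma" and Gamma_Pi: "Gamma \<subseteq> Pi_s"
    and Gamma_skew: "Gamma \<inter> Omega = {0}"
    and Bbar: "minimal_blocking_lines_in emb Gamma Bbar"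
begin

lemma sc_eq: "sc c v = emb c *s v" by (simp add: sc_def scq_def)

lemma emb_add: "emb (a + b) = emb a + emb b" using emb by (simp add: subfield_emb_def)
lemma emb_mult: "emb (a * b) = emb a * emb b" using emb by (simp add: subfield_emb_def)
lemma emb_0[simp]: "emb 0 = 0" using emb by (simp add: subfield_emb_def)
lemma emb_1[simp]: "emb 1 = 1" using emb by (simp add: subfield_emb_def)
lemma emb_inj: "inj emb" using emb by (simp add: subfield_emb_def)
lemma emb_eq0[simp]: "emb a = 0 \<longleftrightarrow> a = 0"
  using emb_inj emb_0 by (metis injD)

lemma sub_q_eq: "sub_q emb S = q.subspace S" by (simp add: sub_q_def sc_def)
lemma span_q_eq: "span_q emb S = q.span S" by (simp add: span_q_def sc_def)
lemma dim_q_eq: "dim_q emb S = q.dim S" by (simp add: dim_q_def sc_def)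
lemma pg_eq: "pg_q_subspace emb d W \<longleftrightarrow> q.subspace W \<and> q.dim W = d + 1"
  by (simp add: pg_q_subspace_def sub_q_eq dim_q_eq)
lemma sub_Q_eq: "sub_Q S = vec.subspace S" by (simp add: sub_Q_def)
lemma span_Q_eq: "span_Q S = vec.span S" by (simp add: span_Q_def)
lemma dim_Q_eq: "dim_Q S = vec.dim S" by (simp add: dim_Q_def)

lemma vsub_qsub: "vec.subspace S \<Longrightarrow> q.subspace S"
  unfolding q.subspace_def vec.subspace_def sc_eq by blast

lemma qspan_vspan: "q.span S \<subseteq> vec.span S"
  by (rule q.span_minimal) (auto intro: vsub_qsub vec.span_base)

lemma card_a_gt1: "1 < CARD('a)"
proof -
  have "(0::'a) \<noteq> 1" by simp
  then have "2 \<le> card {0::'a,1}" by simp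
  also have "\<dots> \<le> CARD('a)" by (rule card_mono) auto
  finally show ?thesis by simp
qed

lemma dim_rel: assumes "vec.subspace S" shows "q.dim S = t * vec.dim S"
proof -
  have fS: "finite S" by simp
  have "card S = CARD('a) ^ q.dim S"
    by (rule q.card_subspace_dim[OF _ vsub_qsub[OF assms] fS]) simp
  moreover have "card S = CARD('b) ^ vec.dim S"
    by (rule vec.card_subspace_dim[OF _ assms fS]) simp
  ultimately have "CARD('a) ^ q.dim S = CARD('a) ^ (t * vec.dim S)"
    by (simp add: t_def power_mult)
  then show ?thesis using card_a_gt1 power_inject_exp by blast
qed

lemma nkt: "4 \<le> (n - k) * t"
proof -
  have "1 \<le> n - k" using kn by simp
  then have "1 * 4 \<le> (n - k) * t" using t4 by (intro mult_le_mono) auto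
  then show ?thesis by simp
qed

lemma Pi: "q.subspace Pi_s" "q.dim Pi_s = (n - k) * t + 2"
  using Pi_sub by (auto simp: pg_eq)
lemma Om: "q.subspace Omega" "q.dim Omega = (n - k) * t - 1"
  using Omega_sub nkt by (auto simp: pg_eq)
lemma OmNu: "q.dim (Omega \<inter> nu) = (n - k) * t - 3"
  using Omega_nu nkt by (auto simp: pg_eq)
lemma Ga: "q.subspace Gamma" "q.dim Gamma = 3"
  using Gamma_sub by (auto simp: pg_eq)
lemma nuV: "vec.subspace nu" "vec.dim nu = n - k"
  using nu_D by (auto simp: D_subspace_def sub_Q_eq dim_Q_eq)
lemma nuq: "q.subspace nu" "q.dim nu = (n - k) * t"
  using nuV vsub_qsub dim_rel by auto

lemma Uspan: "span_Q (\<Union>(Bset Pi_s)) = vec.span Pi_s"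
proof -
  have a: "\<Union>(Bset Pi_s) \<subseteq> vec.span Pi_s"
  proof
    fix z assume "z \<in> \<Union>(Bset Pi_s)"
    then obtain S where S: "S \<in> Bset Pi_s" "z \<in> S" by blast
    then obtain v where v: "S = vec.span {v}" "v \<noteq> 0"
      by (auto simp: Bset_def desarg_spread_def span_Q_eq)
    obtain w where w: "w \<in> S" "w \<in> Pi_s" "w \<noteq> 0" using S by (auto simp: Bset_def)
    have "S = vec.span {w}" using vec.span_single_eq[of w v] v w by simp
    also have "\<dots> \<subseteq> vec.span Pi_s" using w by (intro vec.span_mono) auto
    finally show "z \<in> vec.span Pi_s" using S by blast
  qed
  have b: "Pi_s \<subseteq> vec.span (\<Union>(Bset Pi_s))"
  proof
    fix w assume w: "w \<in> Pi_s"
    show "w \<in> vec.span (\<Union>(Bset Pi_s))"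
    proof (cases "w = 0")
      case True then show ?thesis by (simp add: vec.span_zero)
    next
      case False
      have "vec.span {w} \<in> Bset Pi_s"
        using False w by (auto simp: Bset_def desarg_spread_def span_Q_eq intro: vec.span_base)
      moreover have "w \<in> vec.span {w}" by (simp add: vec.span_base)
      ultimately show ?thesis by (meson UnionI vec.span_base)
    qed
  qed
  show ?thesis unfolding span_Q_eq
    using vec.span_minimal[OF a] vec.span_minimal[OF b] by blast
qed

lemma dimU: "vec.dim (vec.span Pi_s) = n - k + 2"
  using Pi_span unfolding Uspan dim_Q_eq .

lemma k2: "2 \<le> k"
proof -
  have "vec.dim (vec.span Pi_s) \<le> vec.dim (UNIV::('b^'n) set)" by (rule vec.dim_subset) simp
  then have "n - k + 2 \<le> n" using dimU by (simp add: card_cart_basis n_def)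
  then show ?thesis by simp
qed

lemma Om_nu_Pi: "ssum Omega nu = Pi_s"
proof -
  have g: "q.dim (ssum Omega nu) + q.dim (Omega \<inter> nu) = q.dim Omega + q.dim nu"
    using q.grass Om nuq by blast
  have "q.dim (ssum Omega nu) = (n - k) * t + 2" using g OmNu Om nuq nkt by linarith
  moreover have "ssum Omega nu \<subseteq> Pi_s" using q.ssum_le Pi Omega_Pi nu_Pi by blast
  moreover have "q.subspace (ssum Omega nu)" using q.ssum_sub Om nuq by blast
  ultimately show ?thesis using q.subspace_dim_equal Pi by (metis le_refl)
qed

lemma Om_Ga_Pi: "ssum Omega Gamma = Pi_s"
proof -
  have g: "q.dim (ssum Omega Gamma) + q.dim (Omega \<inter> Gamma) = q.dim Omega + q.dim Gamma"
    using q.grass Om Ga by blast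
  have "q.dim (Omega \<inter> Gamma) = 0" using Gamma_skew by (simp add: Int_commute)
  then have "q.dim (ssum Omega Gamma) = (n - k) * t + 2" using g Om Ga nkt by linarith
  moreover have "ssum Omega Gamma \<subseteq> Pi_s" using q.ssum_le Pi Omega_Pi Gamma_Pi by blast
  moreover have "q.subspace (ssum Omega Gamma)" using q.ssum_sub Om Ga by blast
  ultimately show ?thesis using q.subspace_dim_equal Pi by (metis le_refl)
qed

lemma Bpts: "P \<in> Bbar \<Longrightarrow> q.subspace P \<and> q.dim P = 1 \<and> P \<subseteq> Gamma"
  using Bbar by (auto simp: minimal_blocking_lines_in_def blocking_lines_in_def points_q_def pg_eq)

lemma Bblock: "q.subspace L \<Longrightarrow> q.dim L = 2 \<Longrightarrow> L \<subseteq> Gamma \<Longrightarrow> \<exists>P\<in>Bbar. P \<subseteq> L"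
  using Bbar by (auto simp: minimal_blocking_lines_in_def blocking_lines_in_def pg_eq)

lemma line_ex: obtains L where "q.subspace L" "q.dim L = 2" "L \<subseteq> Gamma"
  using q.sub_of_dim[of Gamma 2] Ga by auto

lemma Bbar_ne: "Bbar \<noteq> {}"
  using line_ex Bblock by blast

lemma K_eq: "cone emb Omega Bbar = (\<Union>P\<in>Bbar. ssum P Omega)"
  unfolding cone_def span_q_eq using q.ssum_span Bpts Om by auto

lemma K_Pi: "cone emb Omega Bbar \<subseteq> Pi_s"
  unfolding K_eq using q.ssum_le Pi Omega_Pi Bpts Gamma_Pi by blast

lemma Om_K: "Omega \<subseteq> cone emb Omega Bbar"
  unfolding K_eq using q.ssum_ge2 Bpts Bbar_ne by blast

lemma K_mem: "y \<in> cone emb Omega Bbar \<Longrightarrow> \<exists>P\<in>Bbar. \<exists>p\<in>P. \<exists>z\<in>Omega. y = p + z"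
  unfolding K_eq ssum_def by blast

abbreviation "K \<equiv> cone emb Omega Bbar"
abbreviation "U \<equiv> vec.span Pi_s"

lemma inBset: "m \<in> K \<Longrightarrow> m \<noteq> 0 \<Longrightarrow> vec.span {m} \<in> Bset K"
  by (auto simp: Bset_def desarg_spread_def span_Q_eq intro: vec.span_base)

lemma span1_le: "vec.subspace W \<Longrightarrow> m \<in> W \<Longrightarrow> vec.span {m} \<subseteq> W"
  using vec.span_minimal by blast

lemma dim_le_n: "vec.dim (A::('b^'n) set) \<le> n"
proof -
  have "vec.dim A \<le> vec.dim (UNIV::('b^'n) set)" by (rule vec.dim_subset) simp
  then show ?thesis by (simp add: card_cart_basis n_def)
qed

lemma Pi_U: "Pi_s \<subseteq> U" by (rule vec.span_superset)
lemma nu_U: "nu \<subseteq> U" using Pi_U nu_Pi by blast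
lemma K_U: "K \<subseteq> U" using Pi_U K_Pi by blast

lemma block: assumes W: "vec.subspace W" "vec.dim W = k" shows "\<exists>P\<in>Bset K. P \<subseteq> W"
proof -
  define X where "X = W \<inter> U"
  have XV: "vec.subspace X" unfolding X_def using W vec.subspace_inter by blast
  have XW: "X \<subseteq> W" "X \<subseteq> U" unfolding X_def by auto
  have "vec.dim (ssum W U) + vec.dim X = vec.dim W + vec.dim U"
    unfolding X_def using vec.grass W by blast
  moreover have "vec.dim (ssum W U) \<le> n" by (rule dim_le_n)
  ultimately have dimX: "2 \<le> vec.dim X" using W dimU kn by linarith
  show ?thesis
  proof (cases "\<exists>v. v \<in> X \<inter> nu \<and> v \<noteq> 0")
    case True
    then obtain v where v: "v \<in> X" "v \<in> nu" "v \<noteq> 0" by blast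
    define S where "S = vec.span {v}"
    have SV: "vec.subspace S" unfolding S_def by simp
    have Snu: "S \<subseteq> nu" unfolding S_def using span1_le nuV v by blast
    have SW: "S \<subseteq> W" unfolding S_def using span1_le W v XW by blast
    have "vec.dim S = 1" unfolding S_def using v by simp
    then have dS: "q.dim S = t" using dim_rel SV by simp
    have Sq: "q.subspace S" using SV vsub_qsub by blast
    have ONq: "q.subspace (Omega \<inter> nu)" using Om nuq q.subspace_inter by blast
    have g: "q.dim (ssum S (Omega \<inter> nu)) + q.dim (S \<inter> (Omega \<inter> nu)) = q.dim S + q.dim (Omega \<inter> nu)"
      using q.grass Sq ONq by blast
    have "ssum S (Omega \<inter> nu) \<subseteq> nu" using q.ssum_le nuq Snu by blast
    then have "q.dim (ssum S (Omega \<inter> nu)) \<le> (n - k) * t" using q.dim_subset nuq by metis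
    then have "0 < q.dim (S \<inter> (Omega \<inter> nu))" using g dS OmNu t4 nkt by linarith
    then obtain w where w: "w \<in> S \<inter> (Omega \<inter> nu)" "w \<noteq> 0" using q.nonzero_of_dim by blast
    have "S \<in> Bset K"
      using v w Om_K by (auto simp: S_def Bset_def desarg_spread_def span_Q_eq)
    then show ?thesis using SW by blast
  next
    case False
    then have Xnu: "X \<inter> nu \<subseteq> {0}" by blast
    have "vec.dim (ssum X nu) + vec.dim (X \<inter> nu) = vec.dim X + vec.dim nu"
      using vec.grass XV nuV by blast
    moreover have "vec.dim (X \<inter> nu) = 0" using Xnu by simp
    moreover have sXU: "ssum X nu \<subseteq> U" using vec.ssum_le XW nu_U by (metis vec.subspace_span)
    moreover have "vec.dim (ssum X nu) \<le> vec.dim U" using sXU vec.dim_subset by blast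
    ultimately have "vec.dim (ssum X nu) = vec.dim U" using dimU dimX nuV by linarith
    then have XnuU: "ssum X nu = U"
      using vec.subspace_dim_equal[OF vec.ssum_sub[OF XV nuV(1)] vec.subspace_span sXU] by simp
    define M where "M = X \<inter> Pi_s"
    have Mq: "q.subspace M" unfolding M_def using vsub_qsub[OF XV] Pi q.subspace_inter by blast
    have MX: "M \<subseteq> X" "M \<subseteq> Pi_s" unfolding M_def by auto
    have PiM: "Pi_s \<subseteq> ssum M nu"
    proof
      fix p assume p: "p \<in> Pi_s"
      then have "p \<in> ssum X nu" using XnuU Pi_U by blast
      then obtain x w where xw: "p = x + w" "x \<in> X" "w \<in> nu" unfolding ssum_def by blast
      have "x = p - w" using xw by simp
      then have "x \<in> Pi_s" using q.subspace_diff[OF Pi(1) p] xw nu_Pi by blast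
      then show "p \<in> ssum M nu" using xw unfolding ssum_def M_def by blast
    qed
    have "q.dim Pi_s \<le> q.dim (ssum M nu)" using PiM q.dim_subset by blast
    moreover have "q.dim (ssum M nu) + q.dim (M \<inter> nu) = q.dim M + q.dim nu"
      using q.grass Mq nuq by blast
    ultimately have dimM: "2 \<le> q.dim M" using Pi nuq by linarith
    show ?thesis
    proof (cases "\<exists>m. m \<in> M \<inter> Omega \<and> m \<noteq> 0")
      case True
      then obtain m where m: "m \<in> M" "m \<in> Omega" "m \<noteq> 0" by blast
      have "vec.span {m} \<in> Bset K" using inBset m Om_K by blast
      moreover have "vec.span {m} \<subseteq> W" using span1_le W m MX XW by blast
      ultimately show ?thesis by blast
    next
      case False
      then have MO: "M \<inter> Omega \<subseteq> {0}" by blast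
      have MOq: "q.subspace (ssum M Omega)" using q.ssum_sub Mq Om by blast
      have g1: "q.dim (ssum M Omega) + q.dim (M \<inter> Omega) = q.dim M + q.dim Omega"
        using q.grass Mq Om by blast
      have "q.dim (M \<inter> Omega) = 0" using MO by simp
      define Y where "Y = ssum M Omega \<inter> Gamma"
      have Yq: "q.subspace Y" unfolding Y_def using MOq Ga q.subspace_inter by blast
      have g2: "q.dim (ssum (ssum M Omega) Gamma) + q.dim Y = q.dim (ssum M Omega) + q.dim Gamma"
        unfolding Y_def using q.grass MOq Ga by blast
      have "ssum M Omega \<subseteq> Pi_s" using q.ssum_le Pi MX Omega_Pi by blast
      then have "ssum (ssum M Omega) Gamma \<subseteq> Pi_s" using q.ssum_le Pi Gamma_Pi by blast
      then have "q.dim (ssum (ssum M Omega) Gamma) \<le> q.dim Pi_s" using q.dim_subset by blast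
      then have "2 \<le> q.dim Y" using g1 g2 `q.dim (M \<inter> Omega) = 0` Pi Om Ga dimM nkt by linarith
      then obtain L where L: "q.subspace L" "L \<subseteq> Y" "q.dim L = 2" using q.sub_of_dim Yq by metis
      have "L \<subseteq> Gamma" using L unfolding Y_def by blast
      then obtain P where P: "P \<in> Bbar" "P \<subseteq> L" using Bblock L by blast
      have "0 < q.dim P" using Bpts P by simp
      then obtain y where y: "y \<in> P" "y \<noteq> 0" using q.nonzero_of_dim by blast
      have "y \<in> ssum M Omega" using y P L unfolding Y_def by blast
      then obtain m z where mz: "y = m + z" "m \<in> M" "z \<in> Omega" unfolding ssum_def by blast
      have yG: "y \<in> Gamma" using y P L unfolding Y_def by blast
      have "m \<noteq> 0"
      proof
        assume "m = 0"
        then have "y \<in> Omega" using mz by simp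
        then show False using yG y Gamma_skew by blast
      qed
      moreover have "m \<in> K"
      proof -
        have "- z \<in> Omega" using Om q.subspace_neg mz by blast
        moreover have "m = y + - z" using mz by simp
        ultimately have "m \<in> ssum P Omega" using y unfolding ssum_def by blast
        then show ?thesis using P unfolding K_eq by blast
      qed
      ultimately have "vec.span {m} \<in> Bset K" using inBset by blast
      moreover have "vec.span {m} \<subseteq> W" using span1_le W mz MX XW by blast
      ultimately show ?thesis by blast
    qed
  qed
qed

lemma LtoW: assumes L: "vec.subspace L" "vec.dim L = 2" "L \<subseteq> U"
  shows "\<exists>W. vec.subspace W \<and> vec.dim W = k \<and> W \<inter> U \<subseteq> L"
proof -
  obtain BU where BU: "BU \<subseteq> U" "vec.independent BU" "U \<subseteq> vec.span BU" "card BU = vec.dim U"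
    using vec.basis_exists by blast
  obtain B where B: "BU \<subseteq> B" "vec.independent B" "UNIV \<subseteq> vec.span B"
    using vec.maximal_independent_subset_extend[OF subset_UNIV BU(2)] by metis
  have fB: "finite B" by (rule finite_subset[OF subset_UNIV]) simp
  have "card B = vec.dim (UNIV::('b^'n) set)"
    using vec.basis_card_eq_dim[OF subset_UNIV B(3) B(2)] .
  then have cB: "card B = n" by (simp add: card_cart_basis n_def)
  define C where "C = vec.span (B - BU)"
  have CV: "vec.subspace C" unfolding C_def by simp
  have "vec.independent (B - BU)" using B vec.independent_mono by blast
  then have "vec.dim C = card (B - BU)"
    unfolding C_def using vec.dim_span_eq_card_independent by blast
  also have "\<dots> = card B - card BU" using card_Diff_subset[of BU B] B(1) finite_subset[OF B(1) fB] by simp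
  finally have dC: "vec.dim C = n - (n - k + 2)" using cB BU dimU by simp
  have "B \<subseteq> ssum C U"
  proof
    fix b assume b: "b \<in> B"
    show "b \<in> ssum C U"
    proof (cases "b \<in> BU")
      case True then show ?thesis using vec.ssum_ge2[OF CV] BU by blast
    next
      case False then have "b \<in> C" using b unfolding C_def by (blast intro: vec.span_base)
      then show ?thesis using vec.ssum_ge1[of U C] vec.subspace_span by blast
    qed
  qed
  then have "vec.dim B \<le> vec.dim (ssum C U)" using vec.dim_subset by blast
  moreover have "vec.dim B = card B" using vec.dim_eq_card_independent[OF B(2)] .
  ultimately have "n \<le> vec.dim (ssum C U)" using cB by simp
  moreover have "vec.dim (ssum C U) \<le> n" by (rule dim_le_n)
  moreover have "vec.dim (ssum C U) + vec.dim (C \<inter> U) = vec.dim C + vec.dim U"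
    using vec.grass[OF CV vec.subspace_span] .
  ultimately have "vec.dim (C \<inter> U) = 0" using dC dimU kn k2 by linarith
  then have CU: "C \<inter> U \<subseteq> {0}" by simp
  define W where "W = ssum L C"
  have WV: "vec.subspace W" unfolding W_def using vec.ssum_sub L CV by blast
  have g: "vec.dim W + vec.dim (L \<inter> C) = vec.dim L + vec.dim C" unfolding W_def using vec.grass L CV by blast
  have "L \<inter> C \<subseteq> {0}" using CU L by blast
  then have "vec.dim (L \<inter> C) = 0" by simp
  then have dW: "vec.dim W = k" using g dC L k2 kn by linarith
  have "W \<inter> U \<subseteq> L"
  proof
    fix x assume x: "x \<in> W \<inter> U"
    then obtain l c where lc: "x = l + c" "l \<in> L" "c \<in> C" unfolding W_def ssum_def by blast
    have "c = x - l" using lc by simp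
    then have "c \<in> U" using x lc L vec.subspace_diff[of U x l] by auto
    then have "c = 0" using CU lc by blast
    then show "x \<in> L" using lc by simp
  qed
  then show ?thesis using WV dW by blast
qed

lemma Bset_pt: assumes "P \<in> Bset K" obtains w where "w \<in> P" "w \<in> K" "w \<noteq> 0" "P = vec.span {w}"
proof -
  obtain v where v: "P = vec.span {v}" using assms by (auto simp: Bset_def desarg_spread_def span_Q_eq)
  obtain w where w: "w \<in> P" "w \<in> K" "w \<noteq> 0" using assms by (auto simp: Bset_def)
  have "P = vec.span {w}" using vec.span_single_eq[of w v] v w by simp
  then show ?thesis using that w by blast
qed

lemma Ucomp: assumes E: "finite E" "card E \<le> 2" "Pi_s \<subseteq> ssum nu (q.span E)"
  shows "vec.dim (vec.span E) = 2 \<and> vec.span E \<inter> nu \<subseteq> {0}"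
proof -
  have SV: "vec.subspace (ssum nu (vec.span E))" using vec.ssum_sub nuV by blast
  have "ssum nu (q.span E) \<subseteq> ssum nu (vec.span E)" using qspan_vspan unfolding ssum_def by blast
  then have "Pi_s \<subseteq> ssum nu (vec.span E)" using E(3) by (rule order_trans[rotated])
  then have "U \<subseteq> ssum nu (vec.span E)" using vec.span_minimal SV by blast
  then have "vec.dim U \<le> vec.dim (ssum nu (vec.span E))" using vec.dim_subset by blast
  moreover have "vec.dim (ssum nu (vec.span E)) + vec.dim (nu \<inter> vec.span E) = vec.dim nu + vec.dim (vec.span E)"
    using vec.grass nuV by blast
  moreover have "vec.dim (vec.span E) \<le> 2" using vec.dim_le_card[of "vec.span E" E] E by simp
  ultimately have "vec.dim (nu \<inter> vec.span E) = 0 \<and> vec.dim (vec.span E) = 2" using dimU nuV by linarith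
  then show ?thesis by auto
qed

lemma qscale_cancel: assumes "b \<noteq> 0" "q.subspace S" "sc b v \<in> S" shows "v \<in> S"
proof -
  have "sc (inverse b) (sc b v) = v" using assms(1) by (simp add: q.scale_scale)
  then show ?thesis using q.subspace_scale[OF assms(2,3)] by metis
qed

lemma vscale_cancel: assumes "b \<noteq> 0" "vec.subspace S" "b *s v \<in> S" shows "v \<in> S"
proof -
  have "inverse b *s (b *s v) = v" using assms(1) by simp
  then show ?thesis using vec.subspace_scale[OF assms(2,3)] by metis
qed

lemma qsub_span_Un: "q.subspace A \<Longrightarrow> q.span (A \<union> E) = ssum A (q.span E)"
proof -
  assume "q.subspace A"
  then have e: "q.span A = A" by simp
  show ?thesis unfolding q.span_Un ssum_def e ..
qed

lemma theta_ex: "\<exists>\<theta>. \<theta> \<notin> range emb"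
proof (rule ccontr)
  assume "\<not> ?thesis"
  then have "range emb = UNIV" by blast
  then have "CARD('b) = card (range emb)" by simp
  also have "\<dots> = CARD('a)" using card_image[OF emb_inj] by simp
  finally have "CARD('a) ^ t = CARD('a) ^ 1" using t_def by simp
  then have "t = 1" using card_a_gt1 power_inject_exp by blast
  then show False using t4 by simp
qed

lemma emb_div: "emb (b / a) * emb a = emb b" if "a \<noteq> 0"
  using that by (metis emb_mult divide_eq_eq)

lemma tangentA: assumes x: "x \<in> nu" "x \<noteq> 0"
  shows "\<exists>L. vec.subspace L \<and> vec.dim L = 2 \<and> L \<subseteq> U \<and> (\<forall>P\<in>Bset K. P \<subseteq> L \<longrightarrow> P = vec.span {x})"
proof -
  obtain Bn where Bn: "Bn \<subseteq> nu" "q.independent Bn" "nu \<subseteq> q.span Bn" "card Bn = q.dim nu"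
    using q.basis_exists by blast
  have BnPi: "Bn \<subseteq> Pi_s" using Bn nu_Pi by blast
  obtain B where B: "Bn \<subseteq> B" "B \<subseteq> Pi_s" "q.independent B" "Pi_s \<subseteq> q.span B"
    using q.maximal_independent_subset_extend[OF BnPi Bn(2)] by metis
  have fB: "finite B" by (rule finite_subset[OF subset_UNIV]) simp
  have cB: "card B = q.dim Pi_s" using q.basis_card_eq_dim[OF B(2) B(4) B(3)] .
  have "card (B - Bn) = card B - card Bn" using card_Diff_subset[OF finite_subset[OF B(1) fB] B(1)] .
  then have "card (B - Bn) = 2" using cB Bn(4) Pi nuq by simp
  then obtain e1 e2 where e: "B - Bn = {e1, e2}" "e1 \<noteq> e2" by (meson card_2_iff)
  have e12: "e1 \<in> Pi_s" "e2 \<in> Pi_s" using e B by auto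
  have "B \<subseteq> nu \<union> {e1, e2}" using e Bn by blast
  then have "q.span B \<subseteq> q.span (nu \<union> {e1, e2})" by (rule q.span_mono)
  also have "\<dots> = ssum nu (q.span {e1, e2})" using qsub_span_Un nuq by blast
  finally have PiE: "Pi_s \<subseteq> ssum nu (q.span {e1, e2})" using B by blast
  have "vec.dim (vec.span {e1, e2}) = 2 \<and> vec.span {e1, e2} \<inter> nu \<subseteq> {0}"
    by (rule Ucomp) (use PiE e(2) in auto)
  then have Edim: "vec.dim (vec.span {e1, e2}) = 2" and Enu: "vec.span {e1, e2} \<inter> nu \<subseteq> {0}" by auto
  have "card {e1, e2} = vec.dim (vec.span {e1, e2})" using Edim e(2) by simp
  then have "vec.independent {e1, e2}"
    using vec.card_eq_dim[OF vec.span_superset] by blast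
  then have lin: "a *s e1 + b *s e2 = 0 \<Longrightarrow> a = 0 \<and> b = 0" for a b
  proof -
    assume ind: "vec.independent {e1, e2}" and ab: "a *s e1 + b *s e2 = 0"
    have h: "\<And>v. v = e1 \<or> v = e2 \<Longrightarrow> (if v = e1 then a else b) = 0"
      using vec.independentD[of "{e1,e2}" "{e1,e2}" "\<lambda>v. if v = e1 then a else b"] e(2) ind ab by auto
    show ?thesis using h[of e1] h[of e2] e(2) by auto
  qed
  obtain \<theta> where th: "\<theta> \<notin> range emb" using theta_ex by blast
  define u where "u = e1 + \<theta> *s e2"
  have cu: "c = 0" if c: "c *s u \<in> Pi_s" for c
  proof -
    have "c *s u \<in> ssum nu (q.span {e1, e2})" using c PiE by blast
    then obtain n0 y where ny: "c *s u = n0 + y" "n0 \<in> nu" "y \<in> q.span {e1, e2}" unfolding ssum_def by blast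
    obtain \<alpha> \<beta> where y: "y = sc \<alpha> e1 + sc \<beta> e2" using ny(3) unfolding q.span_pair by blast
    have eq: "n0 = (c - emb \<alpha>) *s e1 + (c * \<theta> - emb \<beta>) *s e2"
      using ny(1) unfolding y u_def sc_eq by (simp add: algebra_simps vec.scale_left_diff_distrib vec.scale_right_distrib)
    have "n0 \<in> vec.span {e1, e2}" unfolding eq
      by (intro vec.span_add vec.span_scale vec.span_base) auto
    then have "n0 = 0" using Enu ny by blast
    then have "c - emb \<alpha> = 0 \<and> c * \<theta> - emb \<beta> = 0" using lin eq by metis
    then have ca: "c = emb \<alpha>" "c * \<theta> = emb \<beta>" by auto
    show "c = 0"
    proof (rule ccontr)
      assume "c \<noteq> 0"
      then have a0: "\<alpha> \<noteq> 0" using ca by auto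
      have "emb (\<beta> / \<alpha>) * emb \<alpha> = \<theta> * emb \<alpha>" using emb_div[OF a0] ca by (simp add: mult.commute)
      then have "\<theta> = emb (\<beta> / \<alpha>)" using a0 by simp
      then show False using th by blast
    qed
  qed
  have uPi: "u \<in> U" unfolding u_def using e12 vec.span_base
    by (intro vec.span_add vec.span_scale) auto
  have u_not: "u \<notin> vec.span {x}"
  proof
    assume "u \<in> vec.span {x}"
    then have "u \<in> nu" using span1_le nuV x by blast
    then have "1 *s u \<in> Pi_s" using nu_Pi by auto
    then show False using cu by fastforce
  qed
  define L where "L = vec.span {x, u}"
  have "vec.independent {x}" using x by simp
  then have indL: "vec.independent {x, u}" using vec.independent_insertI[OF u_not] by (simp add: insert_commute)
  have xu: "x \<noteq> u" using u_not vec.span_base by force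
  have dL: "vec.dim L = 2" unfolding L_def using vec.dim_span_eq_card_independent[OF indL] xu by simp
  have LU: "L \<subseteq> U" unfolding L_def using uPi x nu_U by (intro vec.span_minimal) auto
  have tang: "P = vec.span {x}" if P: "P \<in> Bset K" "P \<subseteq> L" for P
  proof -
    obtain w where w: "w \<in> P" "w \<in> K" "w \<noteq> 0" "P = vec.span {w}" using Bset_pt[OF P(1)] by blast
    have "w \<in> L" using w P by blast
    then obtain a c where ac: "w = a *s x + c *s u" unfolding L_def vec.span_pair by blast
    have wPi: "w \<in> Pi_s" using w K_Pi by blast
    have "a *s x \<in> nu" using x nuV vec.subspace_scale by blast
    then have axPi: "a *s x \<in> Pi_s" using nu_Pi by blast
    have "c *s u = w - a *s x" using ac by simp
    then have "c *s u \<in> Pi_s" using q.subspace_diff[OF Pi(1) wPi axPi] by simp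
    then have "c = 0" using cu by blast
    then have "w \<in> vec.span {x}" using ac by (simp add: vec.span_scale vec.span_base)
    then show ?thesis using w vec.span_single_eq by blast
  qed
  show ?thesis using dL LU tang unfolding L_def by (intro exI[of _ L]) (simp add: L_def)
qed

lemma Wex: assumes r: "r \<in> Pi_s" and xP: "x \<in> Pi_s" shows "\<exists>z\<in>Omega. r + z \<notin> ssum nu (q.span {x})"
proof (rule ccontr)
  define V where "V = ssum nu (q.span {x})"
  have Vq: "q.subspace V" unfolding V_def using q.ssum_sub[OF nuq(1) q.subspace_span] .
  assume "\<not> (\<exists>z\<in>Omega. r + z \<notin> ssum nu (q.span {x}))"
  then have H: "\<And>z. z \<in> Omega \<Longrightarrow> r + z \<in> V" unfolding V_def by blast
  have "r \<in> V" using H[of 0] q.subspace_0[OF Om(1)] by simp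
  have OV: "Omega \<subseteq> V"
  proof
    fix z assume z: "z \<in> Omega"
    have "z = (r + z) - r" by simp
    then show "z \<in> V" using q.subspace_diff[OF Vq H[OF z] \<open>r \<in> V\<close>] by simp
  qed
  have "nu \<subseteq> V" unfolding V_def using q.ssum_ge1[OF q.subspace_span] .
  then have "Pi_s \<subseteq> V" using q.ssum_le[OF Vq OV] Om_nu_Pi by metis
  then have d1: "q.dim Pi_s \<le> q.dim V" using q.dim_subset by blast
  have g: "q.dim V + q.dim (nu \<inter> q.span {x}) = q.dim nu + q.dim (q.span {x})"
    unfolding V_def using q.grass[OF nuq(1) q.subspace_span] .
  have "q.dim (q.span {x}) \<le> 1" using q.dim_le_card[of "q.span {x}" "{x}"] by simp
  then show False using g d1 Pi nuq by linarith
qed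

lemma R_ex: "\<exists>R. q.subspace R \<and> q.dim R = 1 \<and> R \<subseteq> Gamma \<and> R \<notin> Bbar"
proof (rule ccontr)
  assume "\<not> ?thesis"
  then have H: "\<And>R. q.subspace R \<Longrightarrow> q.dim R = 1 \<Longrightarrow> R \<subseteq> Gamma \<Longrightarrow> R \<in> Bbar" by blast
  obtain P0 where P0: "P0 \<in> Bbar" using Bbar_ne by blast
  have "blocking_lines_in emb Gamma (Bbar - {P0})"
    unfolding blocking_lines_in_def
  proof (intro conjI allI impI)
    show "Bbar - {P0} \<subseteq> points_q emb Gamma"
      using Bbar by (auto simp: minimal_blocking_lines_in_def blocking_lines_in_def)
    fix L assume "pg_q_subspace emb 1 L \<and> L \<subseteq> Gamma"
    then have L: "q.subspace L" "q.dim L = 2" "L \<subseteq> Gamma" by (auto simp: pg_eq)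
    obtain BL where BL: "BL \<subseteq> L" "q.independent BL" "L \<subseteq> q.span BL" "card BL = q.dim L"
      using q.basis_exists by blast
    obtain l1 l2 where l: "BL = {l1, l2}" "l1 \<noteq> l2" using BL L card_2_iff by metis
    have n1: "l1 \<notin> q.span {l2}" using BL(2) l q.independent_insert[of l1 "{l2}"] by simp
    have n2: "l2 \<notin> q.span {l1}" using BL(2) l q.independent_insert[of l2 "{l1}"] by (simp add: insert_commute)
    have z: "l1 \<noteq> 0" "l2 \<noteq> 0" using n1 n2 q.span_zero by auto
    have inL: "l1 \<in> L" "l2 \<in> L" using BL l by auto
    have R1: "q.span {l1} \<in> Bbar"
      using H[of "q.span {l1}"] z q.span_minimal[of "{l1}" L] inL L by auto
    have R2: "q.span {l2} \<in> Bbar"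
      using H[of "q.span {l2}"] z q.span_minimal[of "{l2}" L] inL L by auto
    have ne: "q.span {l1} \<noteq> q.span {l2}" using n1 q.span_base[of l1 "{l1}"] by auto
    have sub: "q.span {l1} \<subseteq> L" "q.span {l2} \<subseteq> L" using q.span_minimal inL L by auto
    show "\<exists>P\<in>Bbar - {P0}. P \<subseteq> L"
    proof (cases "q.span {l1} = P0")
      case True then show ?thesis using R2 ne sub by auto
    next
      case False then show ?thesis using R1 sub by auto
    qed
  qed
  moreover have "Bbar - {P0} \<subset> Bbar" using P0 by blast
  ultimately show False using Bbar by (auto simp: minimal_blocking_lines_in_def)
qed

lemma tangent_line: assumes P: "P \<in> Bbar"
  shows "\<exists>l. q.subspace l \<and> q.dim l = 2 \<and> l \<subseteq> Gamma \<and> P \<subseteq> l \<and> (\<forall>P'\<in>Bbar. P' \<subseteq> l \<longrightarrow> P' = P)"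
proof -
  have "Bbar - {P} \<subset> Bbar" using P by blast
  then have nb: "\<not> blocking_lines_in emb Gamma (Bbar - {P})" using Bbar by (auto simp: minimal_blocking_lines_in_def)
  have "Bbar - {P} \<subseteq> points_q emb Gamma"
    using Bbar by (auto simp: minimal_blocking_lines_in_def blocking_lines_in_def)
  then obtain l where l: "pg_q_subspace emb 1 l" "l \<subseteq> Gamma" "\<not> (\<exists>P'\<in>Bbar - {P}. P' \<subseteq> l)"
    using nb unfolding blocking_lines_in_def by blast
  have l2: "q.subspace l" "q.dim l = 2" using l by (auto simp: pg_eq)
  obtain P' where "P' \<in> Bbar" "P' \<subseteq> l" using Bblock l2 l by blast
  then have "P \<subseteq> l" using l by blast
  then show ?thesis using l l2 by blast
qed

lemma tangentB_core: assumes x: "x \<in> K" "x \<notin> nu" "x \<noteq> 0"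
  and w: "w \<in> Pi_s" "w \<notin> ssum nu (q.span {x})"
  and wK: "\<And>a b. sc a x + sc b w \<in> K \<Longrightarrow> b = 0"
  shows "\<exists>L. vec.subspace L \<and> vec.dim L = 2 \<and> L \<subseteq> U \<and> (\<forall>P\<in>Bset K. P \<subseteq> L \<longrightarrow> P = vec.span {x})"
proof -
  define V where "V = ssum nu (q.span {x})"
  have Vq: "q.subspace V" unfolding V_def using q.ssum_sub[OF nuq(1) q.subspace_span] .
  have xPi: "x \<in> Pi_s" using x K_Pi by blast
  define M where "M = q.span {x, w}"
  have Mq: "q.subspace M" unfolding M_def by simp
  have Mnu: "M \<inter> nu \<subseteq> {0}"
  proof
    fix y assume y: "y \<in> M \<inter> nu"
    then obtain a b where ab: "y = sc a x + sc b w" unfolding M_def q.span_pair by blast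
    have b0: "b = 0"
    proof (rule ccontr)
      assume b: "b \<noteq> 0"
      have "sc b w = y + sc (- a) x" using ab by (simp add: q.scale_minus_left)
      moreover have "y + sc (- a) x \<in> V" unfolding V_def ssum_def using y
        by (blast intro: q.span_scale q.span_base)
      ultimately have "w \<in> V" using qscale_cancel[OF b Vq] by simp
      then show False using w unfolding V_def by blast
    qed
    then have "sc a x \<in> nu" using ab y by simp
    then have "a = 0" using qscale_cancel[OF _ nuq(1)] x by blast
    then show "y \<in> {0}" using ab b0 by simp
  qed
  have wx: "w \<notin> q.span {x}" using w q.ssum_ge2[OF nuq(1), of "q.span {x}"] by blast
  have "q.independent {x}" using x by simp
  then have indM: "q.independent {x, w}" using q.independent_insertI[OF wx] by (simp add: insert_commute)
  have xw: "x \<noteq> w" using wx q.span_base by force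
  have dM: "q.dim M = 2" unfolding M_def using q.dim_span_eq_card_independent[OF indM] xw by simp
  have MPi: "M \<subseteq> Pi_s" unfolding M_def using q.span_minimal[of "{x,w}" Pi_s] Pi xPi w by auto
  have g: "q.dim (ssum nu M) + q.dim (nu \<inter> M) = q.dim nu + q.dim M" using q.grass[OF nuq(1) Mq] .
  have d0: "q.dim (nu \<inter> M) = 0" using Mnu by (simp add: Int_commute)
  have "q.dim (ssum nu M) = q.dim Pi_s" using g dM nuq Pi d0 by linarith
  moreover have "ssum nu M \<subseteq> Pi_s" using q.ssum_le[OF Pi(1) nu_Pi MPi] .
  ultimately have PiM: "ssum nu M = Pi_s" using q.subspace_dim_equal[OF q.ssum_sub[OF nuq(1) Mq] Pi(1)] by simp
  have "vec.dim (vec.span {x, w}) = 2 \<and> vec.span {x, w} \<inter> nu \<subseteq> {0}"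
    by (rule Ucomp) (use PiM xw in \<open>auto simp: M_def\<close>)
  then have Ld: "vec.dim (vec.span {x, w}) = 2" and Lnu: "vec.span {x, w} \<inter> nu \<subseteq> {0}" by auto
  define L where "L = vec.span {x, w}"
  have LU: "L \<subseteq> U" unfolding L_def using xPi w Pi_U by (intro vec.span_minimal) auto
  have MsubL: "M \<subseteq> L" unfolding M_def L_def by (rule qspan_vspan)
  have tang: "P = vec.span {x}" if P: "P \<in> Bset K" "P \<subseteq> L" for P
  proof -
    obtain y where y: "y \<in> P" "y \<in> K" "y \<noteq> 0" "P = vec.span {y}" using Bset_pt[OF P(1)] by blast
    have "y \<in> Pi_s" using y K_Pi by blast
    then obtain n0 m where nm: "y = n0 + m" "n0 \<in> nu" "m \<in> M" using PiM unfolding ssum_def by blast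
    have "n0 = y - m" using nm by simp
    moreover have "y \<in> L" "m \<in> L" using y P nm MsubL by auto
    ultimately have "n0 \<in> L" using vec.subspace_diff[of L y m] unfolding L_def by simp
    then have "n0 = 0" using Lnu nm unfolding L_def by blast
    then have ym: "y = m" using nm by simp
    then obtain a b where ab: "y = sc a x + sc b w" using nm unfolding M_def q.span_pair by blast
    then have "b = 0" using wK y by blast
    then have "y = emb a *s x" using ab by (simp add: sc_eq)
    then have "y \<in> vec.span {x}" by (simp add: vec.span_scale vec.span_base)
    then show ?thesis using y vec.span_single_eq by blast
  qed
  show ?thesis using Ld LU tang vec.subspace_span unfolding L_def by blast
qed

lemma w_ex: assumes x: "x \<in> K" "x \<notin> nu" "x \<noteq> 0"
  shows "\<exists>w. w \<in> Pi_s \<and> w \<notin> ssum nu (q.span {x}) \<and> (\<forall>a b. sc a x + sc b w \<in> K \<longrightarrow> b = 0)"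
proof -
  have xPi: "x \<in> Pi_s" using x K_Pi by blast
  show ?thesis
  proof (cases "x \<in> Omega")
    case True
    obtain R where R: "q.subspace R" "q.dim R = 1" "R \<subseteq> Gamma" "R \<notin> Bbar" using R_ex by blast
    have "0 < q.dim R" using R by simp
    then obtain r where r: "r \<in> R" "r \<noteq> 0" by (rule q.nonzero_of_dim)
    have rG: "r \<in> Gamma" using r R by blast
    then have rPi: "r \<in> Pi_s" using Gamma_Pi by blast
    obtain z where z: "z \<in> Omega" "r + z \<notin> ssum nu (q.span {x})" using Wex[OF rPi xPi] by blast
    define w where "w = r + z"
    have wPi: "w \<in> Pi_s" unfolding w_def using q.subspace_add[OF Pi(1) rPi] z Omega_Pi by blast
    have wK: "b = 0" if y: "sc a x + sc b w \<in> K" for a b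
    proof (rule ccontr)
      assume b: "b \<noteq> 0"
      obtain P' p' z' where pz: "P' \<in> Bbar" "p' \<in> P'" "z' \<in> Omega" "sc a x + sc b w = p' + z'"
        using K_mem[OF y] by blast
      have P'p: "q.subspace P'" "q.dim P' = 1" "P' \<subseteq> Gamma" using Bpts pz by auto
      have e: "sc a x + (sc b r + sc b z) = p' + z'"
        using pz(4) unfolding w_def q.scale_right_distrib .
      have deq: "p' - sc b r = (sc a x + sc b z) - z'" using grp1[OF e] .
      have "sc a x \<in> Omega" using q.subspace_scale[OF Om(1) True] .
      moreover have "sc b z \<in> Omega" using q.subspace_scale[OF Om(1) z(1)] .
      ultimately have "sc a x + sc b z \<in> Omega" using q.subspace_add[OF Om(1)] by blast
      then have i1: "(sc a x + sc b z) - z' \<in> Omega" using q.subspace_diff[OF Om(1) _ pz(3)] by blast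
      have "p' \<in> Gamma" using pz P'p by blast
      moreover have "sc b r \<in> Gamma" using q.subspace_scale[OF Ga(1) rG] .
      ultimately have i2: "p' - sc b r \<in> Gamma" using q.subspace_diff[OF Ga(1)] by blast
      have "p' - sc b r \<in> Gamma \<inter> Omega" using i1 i2 deq by simp
      then have "p' - sc b r = 0" using Gamma_skew by blast
      then have "sc b r \<in> P'" using pz by simp
      then have "r \<in> P'" using qscale_cancel[OF b P'p(1)] by simp
      then have "P' = q.span {r}" using q.pt_eq[OF P'p(1) P'p(2)] r by simp
      moreover have "R = q.span {r}" using q.pt_eq[OF R(1) R(2)] r by simp
      ultimately show False using R pz by simp
    qed
    show ?thesis using wPi z wK unfolding w_def by blast
  next
    case False
    obtain P p z where pz: "P \<in> Bbar" "p \<in> P" "z \<in> Omega" "x = p + z" using K_mem[OF x(1)] by blast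
    have Pp: "q.subspace P" "q.dim P = 1" "P \<subseteq> Gamma" using Bpts pz by auto
    have p0: "p \<noteq> 0"
    proof
      assume "p = 0"
      then have "x = z" using pz(4) by simp
      then show False using False pz(3) by simp
    qed
    have Psp: "P = q.span {p}" using q.pt_eq[OF Pp(1) Pp(2) pz(2) p0] .
    obtain l where lall: "q.subspace l \<and> q.dim l = 2 \<and> l \<subseteq> Gamma \<and> P \<subseteq> l \<and> (\<forall>P'\<in>Bbar. P' \<subseteq> l \<longrightarrow> P' = P)"
      using tangent_line[OF pz(1)] by blast
    have l: "q.subspace l" "q.dim l = 2" "l \<subseteq> Gamma" "P \<subseteq> l" using lall by auto
    have ltan: "\<And>P'. P' \<in> Bbar \<Longrightarrow> P' \<subseteq> l \<Longrightarrow> P' = P" using lall by blast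
    have "\<not> l \<subseteq> q.span {p}"
    proof
      assume "l \<subseteq> q.span {p}"
      then have "q.dim l \<le> card {p}" using q.dim_le_card[of l "{p}"] by simp
      then show False using l by simp
    qed
    then obtain z0 where z0: "z0 \<in> l" "z0 \<notin> q.span {p}" by blast
    have z0G: "z0 \<in> Gamma" using z0 l by blast
    then have z0Pi: "z0 \<in> Pi_s" using Gamma_Pi by blast
    obtain z1 where z1: "z1 \<in> Omega" "z0 + z1 \<notin> ssum nu (q.span {x})" using Wex[OF z0Pi xPi] by blast
    define w where "w = z0 + z1"
    have wPi: "w \<in> Pi_s" unfolding w_def using q.subspace_add[OF Pi(1) z0Pi] z1 Omega_Pi by blast
    have pG: "p \<in> Gamma" "p \<in> l" using pz(2) Pp(3) l(4) by auto
    have wK: "b = 0" if y: "sc a x + sc b w \<in> K" for a b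
    proof (rule ccontr)
      assume b: "b \<noteq> 0"
      obtain P' p' z' where pz': "P' \<in> Bbar" "p' \<in> P'" "z' \<in> Omega" "sc a x + sc b w = p' + z'"
        using K_mem[OF y] by blast
      have P'p: "q.subspace P'" "q.dim P' = 1" "P' \<subseteq> Gamma" using Bpts pz' by auto
      have e: "sc a p + sc a z + (sc b z0 + sc b z1) = p' + z'"
        using pz'(4) unfolding w_def pz(4) q.scale_right_distrib .
      have deq: "p' - (sc a p + sc b z0) = (sc a z + sc b z1) - z'" using grp2[OF e] .
      have "sc a z \<in> Omega" using q.subspace_scale[OF Om(1) pz(3)] .
      moreover have "sc b z1 \<in> Omega" using q.subspace_scale[OF Om(1) z1(1)] .
      ultimately have "sc a z + sc b z1 \<in> Omega" using q.subspace_add[OF Om(1)] by blast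
      then have i1: "(sc a z + sc b z1) - z' \<in> Omega" using q.subspace_diff[OF Om(1) _ pz'(3)] by blast
      have "sc a p \<in> Gamma" using q.subspace_scale[OF Ga(1) pG(1)] .
      moreover have "sc b z0 \<in> Gamma" using q.subspace_scale[OF Ga(1) z0G] .
      ultimately have "sc a p + sc b z0 \<in> Gamma" using q.subspace_add[OF Ga(1)] by blast
      moreover have "p' \<in> Gamma" using pz' P'p by blast
      ultimately have i2: "p' - (sc a p + sc b z0) \<in> Gamma" using q.subspace_diff[OF Ga(1)] by blast
      have "p' - (sc a p + sc b z0) \<in> Gamma \<inter> Omega" using i1 i2 deq by simp
      then have "p' - (sc a p + sc b z0) = 0" using Gamma_skew by blast
      then have p'eq: "p' = sc a p + sc b z0" by simp
      have sbz: "sc b z0 = p' - sc a p" using p'eq by simp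
      have p'0: "p' \<noteq> 0"
      proof
        assume "p' = 0"
        then have "sc b z0 = - sc a p" using sbz by simp
        then have "sc b z0 \<in> q.span {p}" using q.span_neg[OF q.span_scale[OF q.span_base[of p "{p}"]]] by simp
        then show False using qscale_cancel[OF b q.subspace_span] z0 by blast
      qed
      have "p' \<in> l" unfolding p'eq using q.subspace_add[OF l(1) q.subspace_scale[OF l(1) pG(2)] q.subspace_scale[OF l(1) z0(1)]] .
      moreover have "P' = q.span {p'}" using q.pt_eq[OF P'p(1) P'p(2) pz'(2) p'0] .
      ultimately have "P' \<subseteq> l" using q.span_minimal l by blast
      then have "P' = P" using ltan pz' by blast
      then have "p' \<in> q.span {p}" using pz' Psp by simp
      then have "sc b z0 \<in> q.span {p}" unfolding sbz using q.span_diff[OF _ q.span_scale[OF q.span_base[of p "{p}"]]] by simp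
      then show False using qscale_cancel[OF b q.subspace_span] z0 by blast
    qed
    show ?thesis using wPi z1 wK unfolding w_def by blast
  qed
qed

lemma tangent: assumes S: "S \<in> Bset K"
  shows "\<exists>L. vec.subspace L \<and> vec.dim L = 2 \<and> L \<subseteq> U \<and> (\<forall>P\<in>Bset K. P \<subseteq> L \<longrightarrow> P = S)"
proof -
  obtain x where x: "x \<in> S" "x \<in> K" "x \<noteq> 0" "S = vec.span {x}" using Bset_pt[OF S] by blast
  show ?thesis
  proof (cases "x \<in> nu")
    case True then show ?thesis using tangentA[OF True x(3)] x(4) by simp
  next
    case False
    obtain w where "w \<in> Pi_s" "w \<notin> ssum nu (q.span {x})" "\<forall>a b. sc a x + sc b w \<in> K \<longrightarrow> b = 0"
      using w_ex[OF x(2) False x(3)] by blast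
    then show ?thesis using tangentB_core[OF x(2) False x(3)] x(4) by simp
  qed
qed

lemma main: "minimal_blocking_Q (k - 1) (Bset K)"
proof -
  have kk: "k - 1 + 1 = k" using k_pos by simp
  have bl: "blocking_Q (k - 1) (Bset K)"
    unfolding blocking_Q_def kk sub_Q_eq dim_Q_eq using block by (auto simp: Bset_def)
  have "\<not> blocking_Q (k - 1) B'" if B': "B' \<subset> Bset K" for B'
  proof
    assume bB: "blocking_Q (k - 1) B'"
    obtain S where S: "S \<in> Bset K" "S \<notin> B'" using B' by blast
    obtain L where L: "vec.subspace L" "vec.dim L = 2" "L \<subseteq> U" "\<forall>P\<in>Bset K. P \<subseteq> L \<longrightarrow> P = S"
      using tangent[OF S(1)] by blast
    obtain W where W: "vec.subspace W" "vec.dim W = k" "W \<inter> U \<subseteq> L" using LtoW[OF L(1-3)] by blast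
    obtain P where P: "P \<in> B'" "P \<subseteq> W" using bB W unfolding blocking_Q_def kk sub_Q_eq dim_Q_eq by blast
    have PK: "P \<in> Bset K" using P B' by blast
    obtain w where w: "w \<in> K" "P = vec.span {w}" using Bset_pt[OF PK] by blast
    have "P \<subseteq> U" using w K_U span1_le[OF vec.subspace_span] by blast
    then have "P \<subseteq> L" using P W by blast
    then have "P = S" using L PK by blast
    then show False using S P by blast
  qed
  then show ?thesis using bl unfolding minimal_blocking_Q_def by blast
qed

end

theorem theorem4p10:
  fixes emb :: "'a::{finite,field} \<Rightarrow> 'b::{finite,field}"
    and n k t :: nat
    and nu Pi_s Omega Gamma :: "('b^'n) set"
    and Bbar :: "('b^'n) set set"
  assumes emb: "subfield_emb emb"
    and t_def: "CARD('b) = CARD('a) ^ t"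
    and n_def: "n = CARD('n)"
    and k_pos: "0 < k" and kn: "k < n" and t4: "4 \<le> t"
    and nu_D: "D_subspace (n - k) (nu :: ('b^'n) set)"
    and Pi_sub: "pg_q_subspace emb ((n - k) * t + 1) Pi_s" and nu_Pi: "nu \<subseteq> Pi_s"
    and Pi_span: "dim_Q (span_Q (\<Union>(Bset Pi_s))) = n - k + 2"
    and Omega_sub: "pg_q_subspace emb ((n - k) * t - 2) Omega" and Omega_Pi: "Omega \<subseteq> Pi_s"
    and Omega_nu: "pg_q_subspace emb ((n - k) * t - 4) (Omega \<inter> nu)"
    and Gamma_sub: "pg_q_subspace emb 2 Gamma" and Gamma_Pi: "Gamma \<subseteq> Pi_s"
    and Gamma_skew: "Gamma \<inter> Omega = {0}"
    and Bbar: "minimal_blocking_lines_in emb Gamma Bbar"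
    and Bbar_nu: "\<forall>P\<in>Bbar. P \<inter> nu = {0}"
  shows "minimal_blocking_Q (k - 1) (Bset (cone emb Omega Bbar))"
proof -
  have vs: "vector_space (scq emb :: 'a \<Rightarrow> 'b^'n \<Rightarrow> 'b^'n)"
    unfolding vector_space_def scq_def
    using emb unfolding subfield_emb_def
    by (simp add: vec.scale_right_distrib vec.scale_left_distrib vec.scale_scale)
  interpret qv: vector_space "scq emb :: 'a \<Rightarrow> 'b^'n \<Rightarrow> 'b^'n" by (rule vs)
  obtain B where B: "qv.independent B" "UNIV \<subseteq> qv.span B"
    using qv.basis_exists[of UNIV] by blast
  interpret ctx: thm_ctx "scq emb :: 'a \<Rightarrow> 'b^'n \<Rightarrow> 'b^'n" B emb n k t nu Pi_s Omega Gamma Bbar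
  proof (unfold_locales)
    show "finite B" by (rule finite_subset[OF subset_UNIV]) simp
    show "qv.independent B" by (rule B(1))
    show "qv.span B = UNIV" using B(2) by blast
  qed (use assms in auto)
  show ?thesis by (rule ctx.main)
qed

end
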